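(* Let $p\in(0,1)$, $\beta\in\mathbb{R}$, $l\ge1$ and $1\le n\le l$ be fixed, let $\theta=0$ and $\alpha=\frac{k}{3^n}$ with $k\in\{0,\dots,3^n-1\}$. There exist functions $\phi_{p,\beta,\frac{k}{3^n},0}$ and $\psi_{p,\beta,\frac{k}{3^n},0}$ such that $H^{(l)}_{p,\beta,\frac{k}{3^n},0}$ is spectrally similar to $\Delta^{(l-n)}_p$ with respect to $\phi_{p,\beta,\frac{k}{3^n},0}$ and $\psi_{p,\beta,\frac{k}{3^n},0}$.
   Context: For $x\in\mathbb{Z}_+\setminus\{0\}$ let $m(x)$ be the largest integer $m\ge0$ with $3^m\mid x$. For $x\ge1$ set $p(x,x-1)=1-p,\ p(x,x+1)=p$ if $3^{-m(x)}x\equiv1\pmod3$, and $p(x,x-1)=p,\ p(x,x+1)=1-p$ if $3^{-m(x)}x\equiv2\pmod3$. Let $V_l=\{0,1,\dots,3^l\}$. The operator $H^{(l)}_{p,\beta,\alpha,\theta}$ acts on $f:V_l\to\mathbb{C}$ by $(H^{(l)}f)(0)=\beta\cos(\theta)f(0)-f(1)$, $(H^{(l)}f)(3^l)=\beta\cos(2\pi\alpha3^l+\theta)f(3^l)-f(3^l-1)$, and for $1\le x\le3^l-1$: $(H^{(l)}f)(x)=\beta\cos(2\pi\alpha x+\theta)f(x)-p(x,x-1)f(x-1)-p(x,x+1)f(x+1)$. The Laplacian $\Delta^{(j)}_p$ on $V_j$ is $(\Delta^{(j)}_pf)(0)=f(0)-f(1)$, $(\Delta^{(j)}_pf)(x)=f(x)-p(x,x-1)f(x-1)-p(x,x+1)f(x+1)$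 for $1\le x\le3^j-1$, $(\Delta^{(j)}_pf)(3^j)=f(3^j)-f(3^j-1)$. Spectral similarity: given Hilbert spaces $\mathcal{H}_0,\mathcal{H}$, an isometry $U:\mathcal{H}_0\to\mathcal{H}$ and bounded operators $H$ on $\mathcal{H}$, $H_0$ on $\mathcal{H}_0$, $H$ is spectrally similar to $H_0$ with functions $\phi,\psi$ if $U^*(H-z)^{-1}U=(\phi(z)H_0-\psi(z))^{-1}$ for all $z\in\mathbb{C}$ for which both sides are defined. Here $\mathcal{H}=\mathbb{C}^{V_l}$, $\mathcal{H}_0=\mathrm{span}\{\delta_v: v\equiv0 \pmod{3^n}\}\subset\mathcal{H}$ identified with $\mathbb{C}^{V_{l-n}}$ via $v\mapsto v/3^n$, and $U$ is the inclusion. *)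

theory Defs
  imports "Jordan_Normal_Form.Matrix" Complex_Main
begin

definition m3 :: "nat \<Rightarrow> nat" where
  "m3 x = (GREATEST m. (3::nat) ^ m dvd x)"

(* transition probabilities p(x,x-1), p(x,x+1) for x \<ge> 1 *)
definition pleft :: "real \<Rightarrow> nat \<Rightarrow> real" where
  "pleft p x = (if (x div 3 ^ m3 x) mod 3 = 1 then 1 - p else p)"

definition pright :: "real \<Rightarrow> nat \<Rightarrow> real" where
  "pright p x = (if (x div 3 ^ m3 x) mod 3 = 1 then p else 1 - p)"

(* The operator H^{(l)}_{p,beta,alpha,theta} on C^{V_l}, V_l = {0..3^l}, as a matrix
   indexed by 0..3^l (row x, column y) *)
definition Hmat :: "real \<Rightarrow> real \<Rightarrow> real \<Rightarrow> real \<Rightarrow> nat \<Rightarrow> complex mat" where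
  "Hmat p \<beta> \<alpha> \<theta> l = mat (3^l + 1) (3^l + 1) (\<lambda>(x, y).
     (if x = y then complex_of_real (\<beta> * cos (2 * pi * \<alpha> * real x + \<theta>)) else 0)
     - (if x = 0 then (if y = 1 then 1 else 0)
        else if x = 3^l then (if y = 3^l - 1 then 1 else 0)
        else (if y = x - 1 then complex_of_real (pleft p x)
              else if y = x + 1 then complex_of_real (pright p x) else 0)))"

definition Lapmat :: "real \<Rightarrow> nat \<Rightarrow> complex mat" where
  "Lapmat p j = mat (3^j + 1) (3^j + 1) (\<lambda>(x, y).
     (if x = y then 1 else 0)
     - (if x = 0 then (if y = 1 then 1 else 0)
        else if x = 3^j then (if y = 3^j - 1 then 1 else 0)
        else (if y = x - 1 then complex_of_real (pleft p x)
              else if y = x + 1 then complex_of_real (pright p x) else 0)))"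

definition Umat :: "nat \<Rightarrow> nat \<Rightarrow> complex mat" where
  "Umat l n = mat (3^l + 1) (3^(l-n) + 1) (\<lambda>(x, v). if x = 3^n * v then 1 else 0)"

definition adj :: "complex mat \<Rightarrow> complex mat" where
  "adj A = map_mat cnj (transpose_mat A)"

definition minv :: "complex mat \<Rightarrow> complex mat" where
  "minv A = (SOME B. inverts_mat A B \<and> inverts_mat B A)"

(* To exclude the degenerate choice making the right-hand side nowhere defined,
   we also require that the right side is defined at all but finitely many z
   at which the left side is defined. *)
definition spectrally_similar ::
  "complex mat \<Rightarrow> complex mat \<Rightarrow> complex mat \<Rightarrow> (complex \<Rightarrow> complex) \<Rightarrow> (complex \<Rightarrow> complex) \<Rightarrow> bool" where
  "spectrally_similar H H0 U \<phi> \<psi> \<longleftrightarrow>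
     (\<forall>z. invertible_mat (H - z \<cdot>\<^sub>m 1\<^sub>m (dim_row H)) \<and>
          invertible_mat (\<phi> z \<cdot>\<^sub>m H0 - \<psi> z \<cdot>\<^sub>m 1\<^sub>m (dim_row H0)) \<longrightarrow>
          adj U * minv (H - z \<cdot>\<^sub>m 1\<^sub>m (dim_row H)) * U
            = minv (\<phi> z \<cdot>\<^sub>m H0 - \<psi> z \<cdot>\<^sub>m 1\<^sub>m (dim_row H0)))
   \<and> finite {z. invertible_mat (H - z \<cdot>\<^sub>m 1\<^sub>m (dim_row H)) \<and>
              \<not> invertible_mat (\<phi> z \<cdot>\<^sub>m H0 - \<psi> z \<cdot>\<^sub>m 1\<^sub>m (dim_row H0))}"

end

theory Submission
  imports Defs "Jordan_Normal_Form.Determinant"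
begin


lemma m3_eq: assumes "\<not> 3 dvd q" shows "m3 (3^m * q) = m"
  unfolding m3_def
proof (rule Greatest_equality)
  show "(3::nat)^m dvd 3^m*q" by simp
  fix y assume h: "(3::nat)^y dvd 3^m*q"
  show "y \<le> m"
  proof (rule ccontr)
    assume "\<not> y \<le> m"
    then have "Suc m \<le> y" by simp
    then have "(3::nat)^(Suc m) dvd 3^y" by (rule le_imp_power_dvd)
    with h have "(3::nat)^(Suc m) dvd 3^m*q" using dvd_trans by blast
    then have "3 dvd q" by simp
    with assms show False by simp
  qed
qed

lemma decomp3: "(x::nat) \<ge> 1 \<Longrightarrow> \<exists>m q. x = 3^m * q \<and> \<not> 3 dvd q"
proof (induction x rule: less_induct)
  case (less x)
  show ?case
  proof (cases "3 dvd x")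
    case True
    then obtain y where y: "x = 3*y" by blast
    with less.prems have "y \<ge> 1" "y < x" by auto
    from less.IH[OF this(2,1)] obtain m q where "y = 3^m*q" "\<not> 3 dvd q" by blast
    with y have "x = 3^(Suc m)*q" by simp
    with \<open>\<not> 3 dvd q\<close> show ?thesis by blast
  next
    case False
    then show ?thesis by (metis mult_1 power_0)
  qed
qed

lemma pleft_eq: assumes "\<not> 3 dvd q" shows "pleft p (3^m*q) = (if q mod 3 = 1 then 1 - p else p)"
  unfolding pleft_def m3_eq[OF assms] by simp

lemma pright_eq: assumes "\<not> 3 dvd q" shows "pright p (3^m*q) = (if q mod 3 = 1 then p else 1 - p)"
  unfolding pright_def m3_eq[OF assms] by simp

lemma pleft_lat: assumes "j \<ge> 1" shows "pleft p (3^n*j) = pleft p j" "pright p (3^n*j) = pright p j"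
proof -
  obtain m q where j: "j = 3^m*q" "\<not> 3 dvd q" using decomp3[OF assms] by blast
  have e: "3^n*j = 3^(n+m)*q" using j by (simp add: power_add)
  show "pleft p (3^n*j) = pleft p j" unfolding e using j pleft_eq by simp
  show "pright p (3^n*j) = pright p j" unfolding e using j pright_eq by simp
qed

lemma small_decomp: assumes "0 < (r::nat)" "r < 3^n"
  obtains m q where "r = 3^m*q" "\<not> 3 dvd q" "m < n"
proof -
  have "r \<ge> 1" using assms by simp
  then obtain m q where j: "r = 3^m*q" "\<not> 3 dvd q" using decomp3 by blast
  have "q \<noteq> 0" using j assms by auto
  then have "(3::nat)^m * 1 \<le> 3^m * q" by (intro mult_le_mono2) simp
  then have "(3::nat)^m \<le> r" using j by simp
  then have "(3::nat)^m < 3^n" using assms(2) by linarith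
  then have "m < n" using power_strict_increasing_iff[of "3::nat"] by simp
  with j that show ?thesis by blast
qed

lemma pleft_per: assumes "0 < r" "r < 3^n"
  shows "pleft p (3^n*j + r) = pleft p r" "pright p (3^n*j + r) = pright p r"
proof -
  obtain m q where j: "r = 3^m*q" "\<not> 3 dvd q" "m < n" using small_decomp assms by blast
  define q' where "q' = 3^(n-m)*j + q"
  have pw: "(3::nat)^n = 3^m * 3^(n-m)" using j(3) by (simp flip: power_add)
  have e: "3^n*j + r = 3^m*q'" unfolding q'_def j(1) pw by (simp add: algebra_simps)
  have "3 dvd (3::nat)^(n-m)" using j(3) by simp
  then obtain t where t: "(3::nat)^(n-m) = 3*t" by blast
  have "q' = q + 3*(t*j)" unfolding q'_def t by simp
  then have m: "q' mod 3 = q mod 3" by simp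
  have nd: "\<not> 3 dvd q'" using j(2) m by (simp add: dvd_eq_mod_eq_0)
  have "pleft p (3^n*j + r) = pleft p (3^m*q')" using e by simp
  also have "... = pleft p r" unfolding j(1) pleft_eq[OF nd] pleft_eq[OF j(2)] m ..
  finally show "pleft p (3^n*j + r) = pleft p r" .
  have "pright p (3^n*j + r) = pright p (3^m*q')" using e by simp
  also have "... = pright p r" unfolding j(1) pright_eq[OF nd] pright_eq[OF j(2)] m ..
  finally show "pright p (3^n*j + r) = pright p r" .
qed

lemma pleft_refl: assumes "0 < r" "r < 3^n"
  shows "pleft p (3^n - r) = pright p r" "pright p (3^n - r) = pleft p r"
proof -
  obtain m q where j: "r = 3^m*q" "\<not> 3 dvd q" "m < n" using small_decomp assms by blast
  define q' where "q' = 3^(n-m) - q"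
  have "(3::nat)^n = 3^m * 3^(n-m)" using j(3) by (simp flip: power_add)
  then have e: "3^n - r = 3^m*q'" unfolding q'_def j(1) by (simp add: diff_mult_distrib2)
  have "3 dvd (3::nat)^(n-m)" using j(3) by simp
  then obtain t where t: "(3::nat)^(n-m) = 3*t" by blast
  have "q < 3^(n-m)" using assms j \<open>(3::nat)^n = 3^m * 3^(n-m)\<close> by simp
  define \<rho> where "\<rho> = q mod 3"
  define s where "s = q div 3"
  have qs: "q = 3*s + \<rho>" unfolding s_def \<rho>_def by simp
  have r3: "\<rho> = 1 \<or> \<rho> = 2" using j(2) unfolding \<rho>_def by (auto simp: dvd_eq_mod_eq_0)
  have "s < t" using \<open>q < 3^(n-m)\<close> qs t by linarith
  then have "3*t - q = 3*(t - Suc s) + (3 - \<rho>)" using qs r3 by auto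
  then have "(3*t - q) mod 3 = (3 - \<rho>) mod 3" by simp
  also have "... = (if q mod 3 = 1 then 2 else 1)" using r3 unfolding \<rho>_def by auto
  finally have m: "q' mod 3 = (if q mod 3 = 1 then 2 else 1)" unfolding q'_def t .
  have nd: "\<not> 3 dvd q'" using m by (simp add: dvd_eq_mod_eq_0 split: if_splits)
  have "pleft p (3^n - r) = pleft p (3^m*q')" using e by simp
  also have "... = pright p r" unfolding j(1) pleft_eq[OF nd] pright_eq[OF j(2)] m by simp
  finally show "pleft p (3^n - r) = pright p r" .
  have "pright p (3^n - r) = pright p (3^m*q')" using e by simp
  also have "... = pleft p r" unfolding j(1) pright_eq[OF nd] pleft_eq[OF j(2)] m by simp
  finally show "pright p (3^n - r) = pleft p r" .
qed

lemma pleft_pos: "0 < p \<Longrightarrow> p < 1 \<Longrightarrow> pleft p x \<noteq> 0 \<and> pright p x \<noteq> 0 \<and> pleft p x + pright p x = 1"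
  unfolding pleft_def pright_def by auto

definition VV :: "real \<Rightarrow> real \<Rightarrow> nat \<Rightarrow> complex" where
  "VV \<beta> \<alpha> x = complex_of_real (\<beta> * cos (2 * pi * \<alpha> * real x + 0))"

lemma cos_nat_per: "cos (x + 2*pi*real m) = cos x"
proof (induction m)
  case (Suc m)
  have "cos (x + 2*pi*real (Suc m)) = cos ((x + 2*pi*real m) + 2*pi)" by (simp add: algebra_simps)
  then show ?case using Suc by simp
qed simp

lemma VV_per: "VV \<beta> (real k / 3^n) (3^n*j + r) = VV \<beta> (real k / 3^n) r"
proof -
  define c where "c = real k / 3^n"
  have d: "c * 3^n = real k" unfolding c_def by simp
  have "2 * pi * c * real (3^n*j + r) = 2 * pi * c * real r + 2 * pi * (c * 3^n) * real j"
    by (simp add: algebra_simps)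
  also have "... = 2 * pi * c * real r + 2*pi*real (k*j)" unfolding d by simp
  finally have "2 * pi * c * real (3^n*j + r) + 0 = (2 * pi * c * real r + 0) + 2*pi*real (k*j)" by simp
  then show ?thesis unfolding VV_def c_def[symmetric] by (simp only: cos_nat_per)
qed

lemma VV_refl: assumes "r \<le> 3^n" shows "VV \<beta> (real k / 3^n) (3^n - r) = VV \<beta> (real k / 3^n) r"
proof -
  define c where "c = real k / 3^n"
  have d: "c * 3^n = real k" unfolding c_def by simp
  have "2 * pi * c * real (3^n - r) = 2 * pi * (c * 3^n) - 2 * pi * c * real r"
    using assms by (simp add: algebra_simps of_nat_diff)
  then have "2 * pi * c * real (3^n - r) + 0 = - (2 * pi * c * real r + 0) + 2*pi*real k"
    unfolding d by simp
  then show ?thesis unfolding VV_def c_def[symmetric] by (simp only: cos_nat_per cos_minus)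
qed



fun sq :: "(nat \<Rightarrow> complex) \<Rightarrow> (nat \<Rightarrow> complex) \<Rightarrow> (nat \<Rightarrow> complex) \<Rightarrow> complex poly \<Rightarrow> complex poly \<Rightarrow> nat \<Rightarrow> complex poly" where
  "sq V L R a b 0 = a"
| "sq V L R a b (Suc 0) = b"
| "sq V L R a b (Suc (Suc r)) = smult (1 / R (Suc r)) ([:V (Suc r), -1:] * sq V L R a b (Suc r) - smult (L (Suc r)) (sq V L R a b r))"

declare sq.simps(3)[simp del]

lemma poly_sq: "R (Suc r) \<noteq> 0 \<Longrightarrow> poly (sq V L R a b (Suc (Suc r))) z
   = ((V (Suc r) - z) * poly (sq V L R a b (Suc r)) z - L (Suc r) * poly (sq V L R a b r) z) / R (Suc r)"
  by (simp add: sq.simps(3) field_simps)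

lemma sq_degree: assumes "\<And>r. R r \<noteq> 0"
  shows "sq V L R 0 1 (Suc r) \<noteq> 0 \<and> degree (sq V L R 0 1 (Suc r)) = r"
proof -
  have "(sq V L R 0 1 (Suc r) \<noteq> 0 \<and> degree (sq V L R 0 1 (Suc r)) = r) \<and>
        (sq V L R 0 1 (Suc (Suc r)) \<noteq> 0 \<and> degree (sq V L R 0 1 (Suc (Suc r))) = Suc r)"
  proof (induction r)
    case 0
    have "sq V L R 0 1 (Suc (Suc 0)) = smult (1 / R (Suc 0)) [:V (Suc 0), -1:]" by (simp add: sq.simps(3))
    then show ?case using assms[of "Suc 0"] by simp
  next
    case (Suc r)
    let ?Q = "[:V (Suc (Suc r)), -1:] * sq V L R 0 1 (Suc (Suc r))"
    let ?X = "smult (L (Suc (Suc r))) (sq V L R 0 1 (Suc r))"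
    have dQ: "degree ?Q = Suc (Suc r)" using Suc.IH by (subst degree_mult_eq) auto
    have dX: "degree ?X < degree ?Q" using Suc.IH dQ by simp
    have "degree (?Q - ?X) = degree (?Q + (- ?X))" by simp
    also have "... = Suc (Suc r)" using dX dQ by (subst degree_add_eq_left) auto
    finally have d: "degree (?Q - ?X) = Suc (Suc r)" .
    then have "?Q - ?X \<noteq> 0" by (metis Zero_not_Suc degree_0)
    have e: "sq V L R 0 1 (Suc (Suc (Suc r))) = smult (1 / R (Suc (Suc r))) (?Q - ?X)" by (rule sq.simps(3))
    show ?case unfolding e using Suc.IH d \<open>?Q - ?X \<noteq> 0\<close> assms[of "Suc (Suc r)"] by simp
  qed
  then show ?thesis by blast
qed

definition sol :: "(nat \<Rightarrow> complex) \<Rightarrow> (nat \<Rightarrow> complex) \<Rightarrow> (nat \<Rightarrow> complex) \<Rightarrow> nat \<Rightarrow> complex \<Rightarrow> (nat \<Rightarrow> complex) \<Rightarrow> bool" where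
  "sol V L R N z f \<longleftrightarrow> (\<forall>r. 0 < r \<and> r < N \<longrightarrow> (V r - z) * f r - L r * f (r - 1) - R r * f (r + 1) = 0)"

definition Uf where "Uf V L R z r = poly (sq V L R 1 0 r) z"
definition Wf where "Wf V L R z r = poly (sq V L R 0 1 r) z"

lemma poly_sq': "R (Suc r) \<noteq> 0 \<Longrightarrow> R (Suc r) * poly (sq V L R a b (Suc (Suc r))) z
   = (V (Suc r) - z) * poly (sq V L R a b (Suc r)) z - L (Suc r) * poly (sq V L R a b r) z"
  unfolding poly_sq by simp

lemma sol_rep: assumes R: "\<And>r. R r \<noteq> 0" and s: "sol V L R N z f" and "r \<le> N"
  shows "f r = f 0 * Uf V L R z r + f 1 * Wf V L R z r"
proof -
  let ?F = "\<lambda>r. f 0 * Uf V L R z r + f 1 * Wf V L R z r"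
  have "Suc r \<le> N \<longrightarrow> f r = ?F r \<and> f (Suc r) = ?F (Suc r)" for r
  proof (induction r)
    case 0
    have "sq V L R 1 0 (Suc 0) = 0" "sq V L R 0 1 (Suc 0) = 1" by simp_all
    then show ?case by (simp add: Uf_def Wf_def)
  next
    case (Suc r)
    show ?case
    proof
      assume h: "Suc (Suc r) \<le> N"
      with Suc.IH have ih: "f r = ?F r" "f (Suc r) = ?F (Suc r)" by auto
      have "0 < Suc r \<and> Suc r < N" using h by simp
      then have "(V (Suc r) - z) * f (Suc r) - L (Suc r) * f (Suc r - 1) - R (Suc r) * f (Suc r + 1) = 0"
        using s unfolding sol_def by blast
      then have e: "R (Suc r) * f (Suc (Suc r)) = (V (Suc r) - z) * f (Suc r) - L (Suc r) * f r"
        by simp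
      have u: "R (Suc r) * Uf V L R z (Suc (Suc r)) = (V (Suc r) - z) * Uf V L R z (Suc r) - L (Suc r) * Uf V L R z r"
        unfolding Uf_def by (rule poly_sq') (rule R)
      have w: "R (Suc r) * Wf V L R z (Suc (Suc r)) = (V (Suc r) - z) * Wf V L R z (Suc r) - L (Suc r) * Wf V L R z r"
        unfolding Wf_def by (rule poly_sq') (rule R)
      have "R (Suc r) * ?F (Suc (Suc r)) = f 0 * (R (Suc r) * Uf V L R z (Suc (Suc r))) + f 1 * (R (Suc r) * Wf V L R z (Suc (Suc r)))"
        by (simp add: algebra_simps)
      also have "... = f 0 * ((V (Suc r) - z) * Uf V L R z (Suc r) - L (Suc r) * Uf V L R z r)
           + f 1 * ((V (Suc r) - z) * Wf V L R z (Suc r) - L (Suc r) * Wf V L R z r)"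
        unfolding u w ..
      also have "... = (V (Suc r) - z) * ?F (Suc r) - L (Suc r) * ?F r"
        by (simp add: algebra_simps)
      finally have "R (Suc r) * f (Suc (Suc r)) = R (Suc r) * ?F (Suc (Suc r))" using e ih by simp
      then have "f (Suc (Suc r)) = ?F (Suc (Suc r))" using R[of "Suc r"] by simp
      then show "f (Suc r) = ?F (Suc r) \<and> f (Suc (Suc r)) = ?F (Suc (Suc r))"
        using ih by simp
    qed
  qed
  note main = this
  show ?thesis
  proof (cases r)
    case 0
    then show ?thesis by (simp add: Uf_def Wf_def)
  next
    case (Suc r')
    then have "Suc r' \<le> N" using assms(3) by simp
    then have "f (Suc r') = ?F (Suc r')" using main[of r'] by blast
    then show ?thesis using Suc by simp
  qed
qed

lemma sol_sq: assumes R: "\<And>r. R r \<noteq> 0" shows "sol V L R N z (\<lambda>r. poly (sq V L R a b r) z)"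
  unfolding sol_def
proof (intro allI impI)
  fix r assume "0 < r \<and> r < N"
  then obtain r' where r: "r = Suc r'" by (cases r) auto
  have "R (Suc r') * poly (sq V L R a b (Suc (Suc r'))) z
   = (V (Suc r') - z) * poly (sq V L R a b (Suc r')) z - L (Suc r') * poly (sq V L R a b r') z"
    by (rule poly_sq'[OF R])
  then show "(V r - z) * poly (sq V L R a b r) z - L r * poly (sq V L R a b (r - 1)) z - R r * poly (sq V L R a b (r + 1)) z = 0"
    unfolding r by simp
qed

lemma sol_lin: "sol V L R N z f \<Longrightarrow> sol V L R N z g \<Longrightarrow> sol V L R N z (\<lambda>r. a * f r + b * g r)"
  unfolding sol_def
proof (intro allI impI)
  fix r assume f: "\<forall>r. 0 < r \<and> r < N \<longrightarrow> (V r - z) * f r - L r * f (r - 1) - R r * f (r + 1) = 0"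
    and g: "\<forall>r. 0 < r \<and> r < N \<longrightarrow> (V r - z) * g r - L r * g (r - 1) - R r * g (r + 1) = 0"
    and r: "0 < r \<and> r < N"
  have "(V r - z) * (a * f r + b * g r) - L r * (a * f (r - 1) + b * g (r - 1)) - R r * (a * f (r + 1) + b * g (r + 1))
    = a * ((V r - z) * f r - L r * f (r - 1) - R r * f (r + 1)) + b * ((V r - z) * g r - L r * g (r - 1) - R r * g (r + 1))"
    by (simp add: algebra_simps)
  then show "(V r - z) * (a * f r + b * g r) - L r * (a * f (r - 1) + b * g (r - 1)) - R r * (a * f (r + 1) + b * g (r + 1)) = 0"
    using f r g by simp
qed

lemma sol_refl: assumes refl: "\<And>r. 0 < r \<Longrightarrow> r < N \<Longrightarrow> V (N - r) = V r \<and> L (N - r) = R r \<and> R (N - r) = L r"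
  and s: "sol V L R N z f" shows "sol V L R N z (\<lambda>r. f (N - r))"
  unfolding sol_def
proof (intro allI impI)
  fix r assume r: "0 < r \<and> r < N"
  then have "0 < N - r \<and> N - r < N" by auto
  with s have e: "(V (N - r) - z) * f (N - r) - L (N - r) * f (N - r - 1) - R (N - r) * f (N - r + 1) = 0"
    unfolding sol_def by blast
  have i: "N - r - 1 = N - (r + 1)" "N - r + 1 = N - (r - 1)" using r by auto
  show "(V r - z) * f (N - r) - L r * f (N - (r - 1)) - R r * f (N - (r + 1)) = 0"
    using e refl[of r] r unfolding i by (simp add: algebra_simps)
qed

definition hL where "hL V L R N z r = Uf V L R z r - Uf V L R z N / Wf V L R z N * Wf V L R z r"
definition hR where "hR V L R N z r = Wf V L R z r / Wf V L R z N"

lemma hLR_basic: assumes "Wf V L R z N \<noteq> 0"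
  shows "hL V L R N z 0 = 1" "hR V L R N z 0 = 0" "hL V L R N z N = 0" "hR V L R N z N = 1"
  using assms by (auto simp: hL_def hR_def Uf_def Wf_def)

lemma sol_hLR: assumes R: "\<And>r. R r \<noteq> 0"
  shows "sol V L R N z (hL V L R N z)" "sol V L R N z (hR V L R N z)"
proof -
  have s1: "sol V L R N z (\<lambda>r. poly (sq V L R 1 0 r) z)" by (rule sol_sq) (rule R)
  have s2: "sol V L R N z (\<lambda>r. poly (sq V L R 0 1 r) z)" by (rule sol_sq) (rule R)
  have "sol V L R N z (\<lambda>r. 1 * poly (sq V L R 1 0 r) z + (- (Uf V L R z N / Wf V L R z N)) * poly (sq V L R 0 1 r) z)"
    by (rule sol_lin[OF s1 s2])
  then show "sol V L R N z (hL V L R N z)" unfolding hL_def[abs_def] Uf_def Wf_def by simp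
  have "sol V L R N z (\<lambda>r. 0 * poly (sq V L R 1 0 r) z + (1 / Wf V L R z N) * poly (sq V L R 0 1 r) z)"
    by (rule sol_lin[OF s1 s2])
  then show "sol V L R N z (hR V L R N z)" unfolding hR_def[abs_def] Uf_def Wf_def by simp
qed

lemma hL_refl: assumes R: "\<And>r. R r \<noteq> 0"
  and refl: "\<And>r. 0 < r \<Longrightarrow> r < N \<Longrightarrow> V (N - r) = V r \<and> L (N - r) = R r \<and> R (N - r) = L r"
  and W: "Wf V L R z N \<noteq> 0" and "r \<le> N"
  shows "hL V L R N z (N - r) = hR V L R N z r"
proof -
  let ?g = "\<lambda>r. 1 * hL V L R N z (N - r) + (-1) * hR V L R N z r"
  have h1: "sol V L R N z (hL V L R N z)" by (rule sol_hLR(1)) (rule R)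
  have h2: "sol V L R N z (hR V L R N z)" by (rule sol_hLR(2)) (rule R)
  have h3: "sol V L R N z (\<lambda>r. hL V L R N z (N - r))"
    by (rule sol_refl[where V=V and L=L and R=R and N=N, OF refl h1])
  have s: "sol V L R N z ?g"
    by (rule sol_lin[OF h3 h2])
  have g0: "?g 0 = 0" using hLR_basic[OF W] by simp
  have "?g N = 0" using hLR_basic[OF W] by simp
  moreover have "?g N = ?g 0 * Uf V L R z N + ?g 1 * Wf V L R z N"
    by (rule sol_rep[where R=R, OF R s]) simp
  ultimately have "?g 1 * Wf V L R z N = 0" using g0 by simp
  then have g1: "?g 1 = 0" using W by simp
  have "?g r = ?g 0 * Uf V L R z r + ?g 1 * Wf V L R z r"
    by (rule sol_rep[where R=R, OF R s \<open>r \<le> N\<close>])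
  then have "?g r = 0" using g0 g1 by simp
  then show ?thesis by simp
qed



definition ee :: "nat \<Rightarrow> (nat \<Rightarrow> complex) \<Rightarrow> (nat \<Rightarrow> complex) \<Rightarrow> nat \<Rightarrow> nat \<Rightarrow> complex" where
  "ee N hl hr x v = (if v = x div N then hl (x mod N) else 0) + (if v = x div N + 1 then hr (x mod N) else 0)"

lemma ee_blk: assumes "r < N" shows "ee N hl hr (N*j + r) v = (if v = j then hl r else 0) + (if v = j + 1 then hr r else 0)"
  using assms unfolding ee_def by simp

lemma ee_blkN: assumes "0 < N" "r \<le> N" "hl 0 = 1" "hr 0 = 0" "hl N = 0" "hr N = 1"
  shows "ee N hl hr (N*j + r) v = (if v = j then hl r else 0) + (if v = j + 1 then hr r else 0)"
proof (cases "r < N")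
  case True then show ?thesis by (rule ee_blk)
next
  case False
  then have r: "r = N" using assms by simp
  have e: "N*j + r = N*(j+1) + 0" unfolding r by simp
  show ?thesis unfolding e ee_blk[OF assms(1)] using assms r by simp
qed

lemma row_identity:
  fixes N M :: nat and V Lf Rf hl hr :: "nat \<Rightarrow> complex" and z \<beta> :: complex
  assumes N: "N \<ge> 2" and M: "M \<ge> 1"
  and Vp: "\<And>j r. V (N*j + r) = V r" and V0: "V 0 = \<beta>"
  and Lp: "\<And>j r. 0 < r \<Longrightarrow> r < N \<Longrightarrow> Lf (N*j + r) = Lf r \<and> Rf (N*j + r) = Rf r"
  and Ll: "\<And>j. j \<ge> 1 \<Longrightarrow> Lf (N*j) = Lf j \<and> Rf (N*j) = Rf j"
  and LR: "\<And>x. Lf x + Rf x = 1"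
  and hsol: "\<And>r. 0 < r \<Longrightarrow> r < N \<Longrightarrow> (V r - z) * hl r - Lf r * hl (r - 1) - Rf r * hl (r + 1) = 0
                                 \<and> (V r - z) * hr r - Lf r * hr (r - 1) - Rf r * hr (r + 1) = 0"
  and hb: "hl 0 = 1" "hr 0 = 0" "hl N = 0" "hr N = 1"
  and hs: "hl (N - 1) = hr 1" "hr (N - 1) = hl 1"
  and x: "x \<le> N*M"
  shows "(V x - z) * ee N hl hr x v
     - (if x \<noteq> 0 then (if x = N*M then 1 else Lf x) * ee N hl hr (x - 1) v else 0)
     - (if x < N*M then (if x = 0 then 1 else Rf x) * ee N hl hr (x + 1) v else 0)
   = (if N dvd x then
        hr 1 * ((if x div N = v then 1 else 0) - (if x div N = 0 then (if v = 1 then 1 else 0)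
           else if x div N = M then (if v = M - 1 then 1 else 0)
           else (if v = x div N - 1 then Lf (x div N) else if v = x div N + 1 then Rf (x div N) else 0)))
        - (if x div N = v then hr 1 + hl 1 + z - \<beta> else 0)
      else 0)"
proof -
  define j where "j = x div N"
  define r where "r = x mod N"
  have xe: "x = N*j + r" unfolding j_def r_def by simp
  have rN: "r < N" unfolding r_def using N by simp
  have eb: "\<And>j r v. r \<le> N \<Longrightarrow> ee N hl hr (N*j + r) v = (if v = j then hl r else 0) + (if v = j + 1 then hr r else 0)"
    by (rule ee_blkN) (use hb N in auto)
  show ?thesis
  proof (cases "r = 0")
    case False
    then have nd: "\<not> N dvd x" unfolding r_def by (simp add: dvd_eq_mod_eq_0)
    have x0: "x \<noteq> 0" using False xe by auto
    have jM: "j < M"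
    proof (rule ccontr)
      assume "\<not> j < M"
      then have "N*M \<le> N*j" by (intro mult_le_mono2) simp
      then show False using x xe False by linarith
    qed
    have xM: "x < N*M" using nd x by (metis dvd_triv_left order_le_less)
    have e0: "ee N hl hr x v = (if v = j then hl r else 0) + (if v = j + 1 then hr r else 0)"
      unfolding xe by (rule eb) (use rN in simp)
    have "x - 1 = N*j + (r - 1)" using xe False by simp
    then have e1: "ee N hl hr (x - 1) v = (if v = j then hl (r - 1) else 0) + (if v = j + 1 then hr (r - 1) else 0)"
      using eb[of "r - 1" j v] rN by simp
    have "x + 1 = N*j + (r + 1)" using xe by simp
    then have e2: "ee N hl hr (x + 1) v = (if v = j then hl (r + 1) else 0) + (if v = j + 1 then hr (r + 1) else 0)"
      using eb[of "r + 1" j v] rN by simp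
    have c: "V x = V r" "Lf x = Lf r" "Rf x = Rf r" using Vp[of j r] Lp[of r j] False rN xe by auto
    have s: "(V r - z) * hl r - Lf r * hl (r - 1) - Rf r * hl (r + 1) = 0"
            "(V r - z) * hr r - Lf r * hr (r - 1) - Rf r * hr (r + 1) = 0"
      using hsol[of r] False rN by auto
    show ?thesis using nd x0 xM unfolding e0 e1 e2 c using s by (auto simp: algebra_simps)
  next
    case True
    then have xj: "x = N*j" using xe by simp
    have dv: "N dvd x" using xj by simp
    have jM: "j \<le> M" using x xj N by simp
    have Vx: "V x = \<beta>" using Vp[of j 0] V0 xj by simp
    have ex: "ee N hl hr x v = (if v = j then 1 else 0)" using eb[of 0 j v] hb xj by simp
    have jd: "x div N = j" unfolding j_def ..
    show ?thesis
    proof (cases "j = 0")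
      case True
      then have x0: "x = 0" using xj by simp
      have xM: "x < N*M" using x0 N M by simp
      have "ee N hl hr (x + 1) v = (if v = 0 then hl 1 else 0) + (if v = 1 then hr 1 else 0)"
        using eb[of 1 0 v] x0 N by simp
      then show ?thesis using x0 xM dv Vx ex True jd by (auto simp: algebra_simps)
    next
      case False
      then have x0: "x \<noteq> 0" using xj N by simp
      have "x - 1 = N*(j - 1) + (N - 1)" using xj False N
        by (cases j) (auto simp: algebra_simps)
      then have e1: "ee N hl hr (x - 1) v = (if v = j - 1 then hr 1 else 0) + (if v = j then hl 1 else 0)"
        using eb[of "N - 1" "j - 1" v] hs False by (simp split: if_splits)
      show ?thesis
      proof (cases "j = M")
        case True
        then have xM: "x = N*M" using xj by simp
        show ?thesis using x0 xM dv Vx ex e1 jd True False by (auto simp: algebra_simps)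
      next
        case jnM: False
        then have xM: "x < N*M" "x \<noteq> N*M" using xj jM N by auto
        have e2: "ee N hl hr (x + 1) v = (if v = j then hl 1 else 0) + (if v = j + 1 then hr 1 else 0)"
          using eb[of 1 j v] xj N by simp
        have l: "Lf x = Lf j" "Rf x = Rf j" using Ll[of j] False xj by auto
        have lr: "Lf j = 1 - Rf j" using LR[of j] by (simp add: algebra_simps)
        show ?thesis using x0 xM dv Vx ex e1 e2 jd False jnM unfolding l
          by (cases "v = j"; cases "v = j - 1"; cases "v = j + 1") (auto simp: algebra_simps lr)
      qed
    qed
  qed
qed



lemma minv_props: assumes "invertible_mat A" "A \<in> carrier_mat d d"
  shows "minv A \<in> carrier_mat d d \<and> A * minv A = 1\<^sub>m d \<and> minv A * A = 1\<^sub>m d"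
proof -
  have ex: "\<exists>B. inverts_mat A B \<and> inverts_mat B A" using assms(1) unfolding invertible_mat_def by blast
  have i: "inverts_mat A (minv A) \<and> inverts_mat (minv A) A" unfolding minv_def by (rule someI_ex[OF ex])
  then have 1: "A * minv A = 1\<^sub>m d" and 2: "minv A * A = 1\<^sub>m (dim_row (minv A))"
    using assms(2) unfolding inverts_mat_def by auto
  have c1: "dim_col (minv A) = d" using arg_cong[OF 1, of dim_col] by simp
  have c2: "dim_row (minv A) = d" using arg_cong[OF 2, of dim_col] assms(2) by simp
  show ?thesis using 1 2 c1 c2 by auto
qed

lemma minv_unique: assumes S: "S \<in> carrier_mat d d" and T: "T \<in> carrier_mat d d" and TS: "T * S = 1\<^sub>m d"
  shows "invertible_mat S \<and> minv S = T"
proof -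
  have ST: "S * T = 1\<^sub>m d" by (rule mat_mult_left_right_inverse[OF T S TS])
  have inv: "invertible_mat S" unfolding invertible_mat_def inverts_mat_def
    using S T ST TS by (intro conjI exI[of _ T]) auto
  have X: "minv S \<in> carrier_mat d d" "S * minv S = 1\<^sub>m d" "minv S * S = 1\<^sub>m d"
    using minv_props[OF inv S] by auto
  have e1: "minv S * (S * T) = (minv S * S) * T" by (rule assoc_mult_mat[symmetric, OF X(1) S T])
  have "minv S * (S * T) = minv S" unfolding ST using X(1) by simp
  moreover have "(minv S * S) * T = T" unfolding X(3) using T by simp
  ultimately show ?thesis using inv e1 by simp
qed

lemma zero_not_inv: assumes "X \<in> carrier_mat d d" "0 < d" "\<And>i j. i < d \<Longrightarrow> j < d \<Longrightarrow> X $$ (i,j) = (0::complex)"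
  shows "\<not> invertible_mat X"
proof
  assume "invertible_mat X"
  from minv_props[OF this assms(1)] have Y: "minv X \<in> carrier_mat d d" "X * minv X = 1\<^sub>m d" by auto
  have "(X * minv X) $$ (0,0) = 1" unfolding Y(2) using assms(2) by simp
  moreover have "(X * minv X) $$ (0,0) = row X 0 \<bullet> col (minv X) 0"
    by (rule index_mult_mat(1)) (use Y assms in auto)
  moreover have "row X 0 \<bullet> col (minv X) 0 = 0" unfolding scalar_prod_def
    by (rule sum.neutral) (use assms Y in auto)
  ultimately show False by simp
qed

lemma tri_sum: assumes "(x::nat) < d"
  shows "(\<Sum>i<d. ((if i = x then a else 0) - (if x \<noteq> 0 \<and> i = x - 1 then b else 0) - (if i = x + 1 then c else 0)) * (g i :: complex))
     = a * g x - (if x \<noteq> 0 then b * g (x - 1) else 0) - (if x + 1 < d then c * g (x + 1) else 0)"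
proof -
  have "(\<Sum>i<d. ((if i = x then a else 0) - (if x \<noteq> 0 \<and> i = x - 1 then b else 0) - (if i = x + 1 then c else 0)) * g i)
    = (\<Sum>i<d. (if i = x then a * g i else 0)) - (\<Sum>i<d. (if x \<noteq> 0 \<and> i = x - 1 then b * g i else 0))
      - (\<Sum>i<d. (if i = x + 1 then c * g i else 0))"
    unfolding sum_subtractf[symmetric] by (rule sum.cong) (auto simp: algebra_simps)
  also have "... = a * g x - (if x \<noteq> 0 then b * g (x - 1) else 0) - (if x + 1 < d then c * g (x + 1) else 0)"
  proof -
    have s1: "(\<Sum>i<d. (if i = x then a * g i else 0)) = a * g x" using assms by (subst sum.delta) auto
    have s2: "(\<Sum>i<d. (if x \<noteq> 0 \<and> i = x - 1 then b * g i else 0)) = (if x \<noteq> 0 then b * g (x - 1) else 0)"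
    proof (cases "x = 0")
      case False
      have "(\<Sum>i<d. (if x \<noteq> 0 \<and> i = x - 1 then b * g i else 0)) = (\<Sum>i<d. (if i = x - 1 then b * g i else 0))"
        using False by simp
      also have "... = b * g (x - 1)" using assms by (subst sum.delta) auto
      finally show ?thesis using False by simp
    qed simp
    have s3: "(\<Sum>i<d. (if i = x + 1 then c * g i else 0)) = (if x + 1 < d then c * g (x + 1) else 0)"
      by (subst sum.delta) auto
    show ?thesis unfolding s1 s2 s3 ..
  qed
  finally show ?thesis .
qed



lemma Aentry_gen:
  fixes N M D :: nat
  assumes NM: "N*M = 3^l" and DNM: "D = N*M + 1" and x: "x < D" and y: "y < D" and l: "l \<ge> 1"
  shows "(Hmat p \<beta> \<alpha> 0 l - z \<cdot>\<^sub>m 1\<^sub>m D) $$ (x,y) = (if y = x then VV \<beta> \<alpha> x - z else 0)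
      - (if x \<noteq> 0 \<and> y = x - 1 then (if x = N*M then 1 else complex_of_real (pleft p x)) else 0)
      - (if y = x + 1 then (if x = 0 then 1 else complex_of_real (pright p x)) else 0)"
proof -
  have Hc: "Hmat p \<beta> \<alpha> 0 l \<in> carrier_mat D D" unfolding Hmat_def DNM NM by simp
  have e1: "(Hmat p \<beta> \<alpha> 0 l - z \<cdot>\<^sub>m 1\<^sub>m D) $$ (x,y) = Hmat p \<beta> \<alpha> 0 l $$ (x,y) - (if x = y then z else 0)"
    using Hc x y by simp
  have e2: "Hmat p \<beta> \<alpha> 0 l $$ (x,y) = (if x = y then VV \<beta> \<alpha> x else 0)
     - (if x = 0 then (if y = 1 then 1 else 0)
        else if x = N*M then (if y = N*M - 1 then 1 else 0)
        else (if y = x - 1 then complex_of_real (pleft p x)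
              else if y = x + 1 then complex_of_real (pright p x) else 0))"
    using x y unfolding Hmat_def DNM NM VV_def by simp
  have l3: "N*M \<noteq> 0" unfolding NM by simp
  show ?thesis
  proof (cases "x = 0")
    case True
    then show ?thesis unfolding e1 e2 by auto
  next
    case False
    then have d: "x - 1 \<noteq> x + 1" "x - 1 \<noteq> x" by auto
    show ?thesis
    proof (cases "x = N*M")
      case True
      then have "y \<noteq> x + 1" using y DNM by simp
      then show ?thesis unfolding e1 e2 using True False d by auto
    next
      case F2: False
      show ?thesis unfolding e1 e2 using False F2 d by auto
    qed
  qed
qed
theorem lemma3p4:
  fixes p \<beta> :: real and l n k :: nat
  assumes "0 < p" "p < 1" "1 \<le> l" "1 \<le> n" "n \<le> l" "k < 3 ^ n"
  shows "\<exists>\<phi> \<psi>. spectrally_similar (Hmat p \<beta> (real k / 3 ^ n) 0 l) (Lapmat p (l - n))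
            (Umat l n) \<phi> \<psi>"
proof -
  define N where "N = (3::nat)^n"
  define M where "M = (3::nat)^(l-n)"
  define D where "D = (3::nat)^l + 1"
  have NM: "N*M = 3^l" unfolding N_def M_def using assms by (simp flip: power_add)
  have "(3::nat)^1 \<le> 3^n" using assms(4) by (intro power_increasing) auto
  then have N3: "N \<ge> 3" unfolding N_def by simp
  have M1: "M \<ge> 1" unfolding M_def by simp
  have DNM: "D = N*M + 1" unfolding D_def NM ..
  define V where "V = VV \<beta> (real k / 3^n)"
  define Lf where "Lf = (\<lambda>x. complex_of_real (pleft p x))"
  define Rf where "Rf = (\<lambda>x. complex_of_real (pright p x))"
  have pp: "\<And>x. pleft p x \<noteq> 0 \<and> pright p x \<noteq> 0 \<and> pleft p x + pright p x = 1" using pleft_pos[OF assms(1,2)] by blast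
  have Rnz: "\<And>r. Rf r \<noteq> 0" unfolding Rf_def using pp by simp
  have LR: "\<And>x. Lf x + Rf x = 1" unfolding Lf_def Rf_def using pp by (metis of_real_1 of_real_add)
  have refl: "\<And>r. 0 < r \<Longrightarrow> r < N \<Longrightarrow> V (N - r) = V r \<and> Lf (N - r) = Rf r \<and> Rf (N - r) = Lf r"
    unfolding N_def V_def Lf_def Rf_def using VV_refl pleft_refl by simp
  have Vp: "\<And>j r. V (N*j + r) = V r" unfolding N_def V_def by (rule VV_per)
  have V0: "V 0 = complex_of_real \<beta>" unfolding V_def VV_def by simp
  have Lp: "\<And>j r. 0 < r \<Longrightarrow> r < N \<Longrightarrow> Lf (N*j + r) = Lf r \<and> Rf (N*j + r) = Rf r"
    unfolding N_def Lf_def Rf_def using pleft_per by simp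
  have Ll: "\<And>j. j \<ge> 1 \<Longrightarrow> Lf (N*j) = Lf j \<and> Rf (N*j) = Rf j"
    unfolding N_def Lf_def Rf_def using pleft_lat by simp
  define W where "W z = Wf V Lf Rf z N" for z
  define hl where "hl z = hL V Lf Rf N z" for z
  define hr where "hr z = hR V Lf Rf N z" for z
  define \<phi> where "\<phi> z = (if W z \<noteq> 0 then hr z 1 else 0)" for z
  define \<psi> where "\<psi> z = (if W z \<noteq> 0 then hr z 1 + hl z 1 + z - complex_of_real \<beta> else 0)" for z
  let ?H = "Hmat p \<beta> (real k / 3 ^ n) 0 l"
  let ?L = "Lapmat p (l - n)"
  let ?U = "Umat l n"
  have Hc: "?H \<in> carrier_mat D D" unfolding Hmat_def D_def by simp
  have Lc: "?L \<in> carrier_mat (M+1) (M+1)" unfolding Lapmat_def M_def by simp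
  have Uc: "?U \<in> carrier_mat D (M+1)" unfolding Umat_def M_def D_def by simp
  have Aentry: "(?H - z \<cdot>\<^sub>m 1\<^sub>m D) $$ (x,y) = (if y = x then V x - z else 0)
      - (if x \<noteq> 0 \<and> y = x - 1 then (if x = N*M then 1 else Lf x) else 0)
      - (if y = x + 1 then (if x = 0 then 1 else Rf x) else 0)" if "x < D" "y < D" for z x y
    using Aentry_gen[OF NM DNM that assms(3)] unfolding V_def Lf_def Rf_def by simp
  have Lentry: "?L $$ (w,v) = (if w = v then 1 else 0) - (if w = 0 then (if v = 1 then 1 else 0)
           else if w = M then (if v = M - 1 then 1 else 0)
           else (if v = w - 1 then Lf w else if v = w + 1 then Rf w else 0))" if "w < M+1" "v < M+1" for w v
    using that unfolding Lapmat_def M_def Lf_def Rf_def by simp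
  have Uentry: "?U $$ (x,w) = (if x = N*w then 1 else 0)" if "x < D" "w < M+1" for x w
    using that unfolding Umat_def M_def D_def N_def by simp
  have key: "invertible_mat (\<phi> z \<cdot>\<^sub>m ?L - \<psi> z \<cdot>\<^sub>m 1\<^sub>m (M+1)) \<and>
      minv (\<phi> z \<cdot>\<^sub>m ?L - \<psi> z \<cdot>\<^sub>m 1\<^sub>m (M+1)) = adj ?U * minv (?H - z \<cdot>\<^sub>m 1\<^sub>m D) * ?U"
    if Wz: "W z \<noteq> 0" and invA: "invertible_mat (?H - z \<cdot>\<^sub>m 1\<^sub>m D)" for z
  proof -
    let ?A = "?H - z \<cdot>\<^sub>m 1\<^sub>m D"
    let ?S = "\<phi> z \<cdot>\<^sub>m ?L - \<psi> z \<cdot>\<^sub>m 1\<^sub>m (M+1)"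
    have Ac: "?A \<in> carrier_mat D D" by (intro minus_carrier_mat smult_carrier_mat one_carrier_mat)
    have Sc: "?S \<in> carrier_mat (M+1) (M+1)" by (intro minus_carrier_mat smult_carrier_mat one_carrier_mat)
    obtain B where B: "B \<in> carrier_mat D D" "?A * B = 1\<^sub>m D" "B * ?A = 1\<^sub>m D" "B = minv ?A"
      using minv_props[OF invA Ac] by blast
    have Wz': "Wf V Lf Rf z N \<noteq> 0" using Wz unfolding W_def .
    note hb = hLR_basic[OF Wz', folded hl_def hr_def]
    have hs1: "hl z (N - 1) = hr z 1" unfolding hl_def hr_def
      by (rule hL_refl[OF Rnz refl Wz']) (use N3 in auto)
    have hs2: "hr z (N - 1) = hl z 1"
    proof -
      have "hl z (N - (N - 1)) = hr z (N - 1)" unfolding hl_def hr_def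
        by (rule hL_refl[OF Rnz refl Wz']) auto
      moreover have "N - (N - 1) = 1" using N3 by simp
      ultimately show ?thesis by simp
    qed
    have sl: "sol V Lf Rf N z (hl z)" unfolding hl_def by (rule sol_hLR(1)) (rule Rnz)
    have sr: "sol V Lf Rf N z (hr z)" unfolding hr_def by (rule sol_hLR(2)) (rule Rnz)
    have hsol: "\<And>r. 0 < r \<Longrightarrow> r < N \<Longrightarrow> (V r - z) * hl z r - Lf r * hl z (r - 1) - Rf r * hl z (r + 1) = 0
                                 \<and> (V r - z) * hr z r - Lf r * hr z (r - 1) - Rf r * hr z (r + 1) = 0"
      using sl sr unfolding sol_def by blast
    define E where "E = mat D (M+1) (\<lambda>(x,v). ee N (hl z) (hr z) x v)"
    have Ec: "E \<in> carrier_mat D (M+1)" unfolding E_def by simp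
    have Eentry: "E $$ (x,v) = ee N (hl z) (hr z) x v" if "x < D" "v < M+1" for x v
      using that unfolding E_def by simp
    have row: "(?A * E) $$ (x,v) = (?U * ?S) $$ (x,v)" if x: "x < D" and v: "v < M+1" for x v
    proof -
      have "x div N \<le> (N*M) div N" using x DNM by (intro div_le_mono) simp
      then have xw: "x div N < M + 1" using N3 by simp
      have "(?A * E) $$ (x,v) = (\<Sum>i<D. ?A $$ (x,i) * E $$ (i,v))"
        using Ac Ec x v by (simp add: scalar_prod_def atLeast0LessThan)
      also have "... = (\<Sum>i<D. ((if i = x then V x - z else 0)
      - (if x \<noteq> 0 \<and> i = x - 1 then (if x = N*M then 1 else Lf x) else 0)
      - (if i = x + 1 then (if x = 0 then 1 else Rf x) else 0)) * ee N (hl z) (hr z) i v)"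
        by (rule sum.cong) (use Aentry Eentry x v in auto)
      also have "... = (V x - z) * ee N (hl z) (hr z) x v
           - (if x \<noteq> 0 then (if x = N*M then 1 else Lf x) * ee N (hl z) (hr z) (x - 1) v else 0)
           - (if x < N*M then (if x = 0 then 1 else Rf x) * ee N (hl z) (hr z) (x + 1) v else 0)"
        by (subst tri_sum[OF x]) (simp add: DNM)
      also have "... = (if N dvd x then
        hr z 1 * ((if x div N = v then 1 else 0) - (if x div N = 0 then (if v = 1 then 1 else 0)
           else if x div N = M then (if v = M - 1 then 1 else 0)
           else (if v = x div N - 1 then Lf (x div N) else if v = x div N + 1 then Rf (x div N) else 0)))
        - (if x div N = v then hr z 1 + hl z 1 + z - complex_of_real \<beta> else 0)
      else 0)"
        by (rule row_identity[OF _ M1 Vp V0 Lp Ll LR hsol hb hs1 hs2]) (use N3 x DNM in auto)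
      also have "... = (\<Sum>w<M+1. ?U $$ (x,w) * ?S $$ (w,v))"
      proof -
        have "(\<Sum>w<M+1. ?U $$ (x,w) * ?S $$ (w,v)) = (\<Sum>w<M+1. if w = x div N then (if N dvd x then ?S $$ (w,v) else 0) else 0)"
          by (rule sum.cong) (use Uentry x v N3 in auto)
        also have "... = (if N dvd x then ?S $$ (x div N, v) else 0)"
          using xw by (subst sum.delta) auto
        also have "... = (if N dvd x then
        hr z 1 * ((if x div N = v then 1 else 0) - (if x div N = 0 then (if v = 1 then 1 else 0)
           else if x div N = M then (if v = M - 1 then 1 else 0)
           else (if v = x div N - 1 then Lf (x div N) else if v = x div N + 1 then Rf (x div N) else 0)))
        - (if x div N = v then hr z 1 + hl z 1 + z - complex_of_real \<beta> else 0)
      else 0)"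
        proof (cases "N dvd x")
          case True
          show ?thesis using True Lc Lentry[OF xw v] xw v Wz unfolding \<phi>_def \<psi>_def by simp
        qed simp
        finally show ?thesis by simp
      qed
      also have "... = (?U * ?S) $$ (x,v)"
        using Uc Sc x v by (simp add: scalar_prod_def atLeast0LessThan)
      finally show ?thesis .
    qed
    have AE: "?A * E = ?U * ?S"
      by (rule eq_matI) (use row Ac Ec Uc Sc in auto)
    have E_eq: "E = B * (?U * ?S)"
    proof -
      have "E = (B * ?A) * E" using B Ec by simp
      also have "... = B * (?A * E)" by (rule assoc_mult_mat[OF B(1) Ac Ec])
      finally show ?thesis unfolding AE .
    qed
    have adjU: "adj ?U \<in> carrier_mat (M+1) D" using Uc unfolding adj_def by simp
    have adjUentry: "adj ?U $$ (w,x) = (if x = N*w then 1 else 0)" if "x < D" "w < M+1" for x w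
      using that Uc Uentry unfolding adj_def by simp
    have UE: "adj ?U * E = 1\<^sub>m (M+1)"
    proof (rule eq_matI)
      fix w v assume w: "w < dim_row (1\<^sub>m (M+1))" and v: "v < dim_col (1\<^sub>m (M+1))"
      then have w': "w < M+1" and v': "v < M+1" by auto
      have NwD: "N*w < D" using w' DNM by (simp add: less_Suc_eq_le)
      have "(adj ?U * E) $$ (w,v) = (\<Sum>x<D. adj ?U $$ (w,x) * E $$ (x,v))"
        using adjU Ec w' v' by (simp add: scalar_prod_def atLeast0LessThan)
      also have "... = (\<Sum>x<D. if x = N*w then ee N (hl z) (hr z) (N*w) v else 0)"
        by (rule sum.cong) (use adjUentry Eentry v' w' in auto)
      also have "... = ee N (hl z) (hr z) (N*w) v" using NwD by (subst sum.delta) auto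
      also have "... = (if v = w then 1 else 0)" using ee_blk[of 0 N "hl z" "hr z" w v] N3 hb by simp
      finally show "(adj ?U * E) $$ (w,v) = 1\<^sub>m (M+1) $$ (w,v)" using w' v' by simp
    qed (use adjU Ec in auto)
    have TS: "(adj ?U * B * ?U) * ?S = 1\<^sub>m (M+1)"
    proof -
      have c1: "adj ?U * B \<in> carrier_mat (M+1) D" using adjU B(1) by simp
      have c2: "?U * ?S \<in> carrier_mat D (M+1)" using Uc Sc by simp
      have "(adj ?U * B * ?U) * ?S = (adj ?U * B) * (?U * ?S)" by (rule assoc_mult_mat[OF c1 Uc Sc])
      also have "... = adj ?U * (B * (?U * ?S))" by (rule assoc_mult_mat[OF adjU B(1) c2])
      finally have "(adj ?U * B * ?U) * ?S = adj ?U * (B * (?U * ?S))" .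
      also have "... = 1\<^sub>m (M+1)" unfolding E_eq[symmetric] by (rule UE)
      finally show ?thesis .
    qed
    have Tc: "adj ?U * B * ?U \<in> carrier_mat (M+1) (M+1)" using adjU B(1) Uc by simp
    show ?thesis using minv_unique[OF Sc Tc TS] B(4) by simp
  qed
  show ?thesis
  proof (rule exI[of _ \<phi>], rule exI[of _ \<psi>])
    have dH: "dim_row ?H = D" using Hc by simp
    have dL: "dim_row ?L = M + 1" using Lc by simp
    have zero: "\<not> invertible_mat (\<phi> z \<cdot>\<^sub>m ?L - \<psi> z \<cdot>\<^sub>m 1\<^sub>m (M+1))" if "W z = 0" for z
      by (rule zero_not_inv[of _ "M+1"]) (use Lc that in \<open>auto simp: \<phi>_def \<psi>_def\<close>)
    have fin: "finite {z. W z = 0}"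
    proof -
      have "sq V Lf Rf 0 1 (Suc (N - 1)) \<noteq> 0" using sq_degree[where R=Rf, OF Rnz] by blast
      moreover have "Suc (N - 1) = N" using N3 by simp
      ultimately have "sq V Lf Rf 0 1 N \<noteq> 0" by simp
      from poly_roots_finite[OF this] show ?thesis unfolding W_def Wf_def .
    qed
    have f1: "\<forall>z. invertible_mat (?H - z \<cdot>\<^sub>m 1\<^sub>m D) \<and> invertible_mat (\<phi> z \<cdot>\<^sub>m ?L - \<psi> z \<cdot>\<^sub>m 1\<^sub>m (M + 1)) \<longrightarrow>
       adj ?U * minv (?H - z \<cdot>\<^sub>m 1\<^sub>m D) * ?U = minv (\<phi> z \<cdot>\<^sub>m ?L - \<psi> z \<cdot>\<^sub>m 1\<^sub>m (M + 1))"
    proof (intro allI impI)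
      fix z assume h: "invertible_mat (?H - z \<cdot>\<^sub>m 1\<^sub>m D) \<and> invertible_mat (\<phi> z \<cdot>\<^sub>m ?L - \<psi> z \<cdot>\<^sub>m 1\<^sub>m (M + 1))"
      then have "W z \<noteq> 0" using zero by blast
      then show "adj ?U * minv (?H - z \<cdot>\<^sub>m 1\<^sub>m D) * ?U = minv (\<phi> z \<cdot>\<^sub>m ?L - \<psi> z \<cdot>\<^sub>m 1\<^sub>m (M + 1))"
        using key h by simp
    qed
    have f2: "finite {z. invertible_mat (?H - z \<cdot>\<^sub>m 1\<^sub>m D) \<and> \<not> invertible_mat (\<phi> z \<cdot>\<^sub>m ?L - \<psi> z \<cdot>\<^sub>m 1\<^sub>m (M + 1))}"
      by (rule finite_subset[OF _ fin]) (use key in blast)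
    show "spectrally_similar ?H ?L ?U \<phi> \<psi>"
      unfolding spectrally_similar_def dH dL using f1 f2 by blast
  qed
qed


end
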